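(* Let $(M,\varphi,g)$ be an anti-paraKähler manifold of dimension $2k$, $(TM,g_{BS})$ its tangent bundle with the Berger type deformed Sasaki metric, and $\xi$ a vector field on $M$ regarded as a map $\xi:(M,g)\to(TM,g_{BS})$. If $\xi$ is an isometric immersion (i.e. $\xi^*g_{BS}=g$), then $\xi$ is totally geodesic; in particular $\xi$ is harmonic.
   Context: An anti-paraKähler manifold $(M,\varphi,g)$ of dimension $2k$ consists of a Riemannian metric $g$ and a $(1,1)$-tensor field $\varphi$ with $\varphi^2=\mathrm{id}$ whose $(+1)$- and $(-1)$-eigenbundles both have rank $k$, such that $g(\varphi X,Y)=g(X,\varphi Y)$ for all vector fields $X,Y$ and $\nabla\varphi=0$, where $\nabla$ is the Levi-Civita connection of $g$. Let $\pi:TM\to M$ be the tangent bundle; points of $TM$ are denoted $u$. For a vector field $X$ on $M$, $X^H$ denotes its horizontal lift to $TM$ with respect to $\nabla$ and $X^V$ its vertical lift. For a constant $\delta$, the Berger type deformed Sasaki metric $g_{BS}$ on $TM$ is the Riemannian metric defined at $u\in TM$ by $g_{BS}(X^H,Y^H)=g(X,Y)$, $g_{BS}(X^H,Y^V)=g_{BS}(X^V,Y^H)=0$, $g_{BS}(X^V,Y^V)=g(X,Y)+\delta^2 g(X,\varphi u)\,g(Y,\varphi u)$ (all evaluated at $\pi(u)$). For a smooth map $f$ between Riemannian manifolds, $\beta(f)(X,Y)=\nabla^{f}_X(df(Y))-df(\nabla_XY)$ and $\tau(f)=\mathrm{trace}\,\beta(f)$; $f$ is totally geodesic if $\beta(f)=0$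 and harmonic if $\tau(f)=0$. *)

theory Defs
  imports "HOL-Analysis.Analysis"
begin

text \<open>Local-coordinate setting: the manifold M is an open set U of real^'n
(coordinates x^i), the tangent bundle TU is U x real^'n with coordinates (x^i, y^i),
represented as vectors in real^('n + 'n): Inl i = x^i, Inr i = y^i.\<close>

definition pd :: "'n::finite \<Rightarrow> (real^'n \<Rightarrow> real) \<Rightarrow> real^'n \<Rightarrow> real" where
  "pd i f x = deriv (\<lambda>t. f (x + t *\<^sub>R axis i 1)) 0"

fun iter_pd :: "'n::finite list \<Rightarrow> (real^'n \<Rightarrow> real) \<Rightarrow> real^'n \<Rightarrow> real" where
  "iter_pd [] f = f"
| "iter_pd (i # is) f = pd i (iter_pd is f)"

definition Cinf_on :: "(real^'n::finite) set \<Rightarrow> (real^'n \<Rightarrow> real) \<Rightarrow> bool" where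
  "Cinf_on U f \<longleftrightarrow> (\<forall>is. continuous_on U (iter_pd is f) \<and>
     (\<forall>i. \<forall>x\<in>U. (\<lambda>t. iter_pd is f (x + t *\<^sub>R axis i 1)) differentiable (at 0)))"

definition riemannian_metric_on :: "(real^'a::finite) set \<Rightarrow> (real^'a \<Rightarrow> real^'a^'a) \<Rightarrow> bool" where
  "riemannian_metric_on U G \<longleftrightarrow>
     (\<forall>a b. Cinf_on U (\<lambda>x. G x $ a $ b)) \<and>
     (\<forall>x\<in>U. transpose (G x) = G x \<and> (\<forall>v. v \<noteq> 0 \<longrightarrow> v \<bullet> (G x *v v) > 0))"

text \<open>Christoffel symbols of the Levi-Civita connection: christoffel G x k i j = Gamma^k_{ij}.\<close>
definition christoffel :: "(real^'a::finite \<Rightarrow> real^'a^'a) \<Rightarrow> real^'a \<Rightarrow> 'a \<Rightarrow> 'a \<Rightarrow> 'a \<Rightarrow> real" where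
  "christoffel G x k i j = (1/2) * (\<Sum>l\<in>UNIV. matrix_inv (G x) $ k $ l *
      (pd i (\<lambda>y. G y $ j $ l) x + pd j (\<lambda>y. G y $ i $ l) x - pd l (\<lambda>y. G y $ i $ j) x))"

definition anti_paraKaehler ::
  "(real^'n::finite) set \<Rightarrow> (real^'n \<Rightarrow> real^'n^'n) \<Rightarrow> (real^'n \<Rightarrow> real^'n^'n) \<Rightarrow> nat \<Rightarrow> bool" where
  "anti_paraKaehler U g phi k \<longleftrightarrow>
     CARD('n) = 2 * k \<and> riemannian_metric_on U g \<and>
     (\<forall>a b. Cinf_on U (\<lambda>x. phi x $ a $ b)) \<and>
     (\<forall>x\<in>U. phi x ** phi x = mat 1 \<and>
        dim {v. phi x *v v = v} = k \<and> dim {v. phi x *v v = - v} = k \<and>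
        (\<forall>X Y. (phi x *v X) \<bullet> (g x *v Y) = X \<bullet> (g x *v (phi x *v Y))) \<and>
        (\<forall>i a b. pd i (\<lambda>y. phi y $ a $ b) x
                 + (\<Sum>c\<in>UNIV. christoffel g x a i c * phi x $ c $ b)
                 - (\<Sum>c\<in>UNIV. christoffel g x c i b * phi x $ a $ c) = 0))"

definition xpart :: "real^('n::finite + 'n) \<Rightarrow> real^'n" where
  "xpart z = (\<chi> i. z $ Inl i)"

definition ypart :: "real^('n::finite + 'n) \<Rightarrow> real^'n" where
  "ypart z = (\<chi> i. z $ Inr i)"

definition tvec :: "real^'n::finite \<Rightarrow> real^'n \<Rightarrow> real^('n + 'n)" where
  "tvec a b = (\<chi> \<alpha>. case \<alpha> of Inl i \<Rightarrow> a $ i | Inr i \<Rightarrow> b $ i)"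

text \<open>A coordinate tangent vector W = a^i d/dx^i + b^i d/dy^i at z = (x,y) equals
  a^H + v^V with v^k = b^k + Gamma^k_{ij}(x) a^i y^j (horizontal lift w.r.t. Levi-Civita).\<close>
definition vcomp :: "(real^'n::finite \<Rightarrow> real^'n^'n) \<Rightarrow> real^('n + 'n) \<Rightarrow> real^('n + 'n) \<Rightarrow> real^'n" where
  "vcomp g z W = (\<chi> k. ypart W $ k +
      (\<Sum>i\<in>UNIV. \<Sum>j\<in>UNIV. christoffel g (xpart z) k i j * xpart W $ i * ypart z $ j))"

definition gBS_form ::
  "(real^'n::finite \<Rightarrow> real^'n^'n) \<Rightarrow> (real^'n \<Rightarrow> real^'n^'n) \<Rightarrow> real \<Rightarrow>
   real^('n + 'n) \<Rightarrow> real^('n + 'n) \<Rightarrow> real^('n + 'n) \<Rightarrow> real" where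
  "gBS_form g phi \<delta> z W W' =
     (let x = xpart z; v = vcomp g z W; v' = vcomp g z W'; pu = phi x *v ypart z in
      xpart W \<bullet> (g x *v xpart W') + v \<bullet> (g x *v v')
      + \<delta>\<^sup>2 * (v \<bullet> (g x *v pu)) * (v' \<bullet> (g x *v pu)))"

definition gBS ::
  "(real^'n::finite \<Rightarrow> real^'n^'n) \<Rightarrow> (real^'n \<Rightarrow> real^'n^'n) \<Rightarrow> real \<Rightarrow>
   real^('n + 'n) \<Rightarrow> real^('n + 'n)^('n + 'n)" where
  "gBS g phi \<delta> z = (\<chi> \<alpha> \<beta>. gBS_form g phi \<delta> z (axis \<alpha> 1) (axis \<beta> 1))"

definition section_map :: "(real^'n::finite \<Rightarrow> real^'n) \<Rightarrow> real^'n \<Rightarrow> real^('n + 'n)" where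
  "section_map \<xi> x = tvec x (\<xi> x)"

definition smooth_vector_field :: "(real^'n::finite) set \<Rightarrow> (real^'n \<Rightarrow> real^'n) \<Rightarrow> bool" where
  "smooth_vector_field U \<xi> \<longleftrightarrow> (\<forall>i. Cinf_on U (\<lambda>x. \<xi> x $ i))"

definition dmap :: "(real^'n::finite \<Rightarrow> real^'m::finite) \<Rightarrow> real^'n \<Rightarrow> 'n \<Rightarrow> real^'m" where
  "dmap F x i = (\<chi> \<gamma>. pd i (\<lambda>y. F y $ \<gamma>) x)"

definition isometric_immersion ::
  "(real^'n::finite) set \<Rightarrow> (real^'n \<Rightarrow> real^'n^'n) \<Rightarrow> (real^'m::finite \<Rightarrow> real^'m^'m) \<Rightarrow>
   (real^'n \<Rightarrow> real^'m) \<Rightarrow> bool" where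
  "isometric_immersion U g G F \<longleftrightarrow>
     (\<forall>x\<in>U. \<forall>i j. dmap F x i \<bullet> (G (F x) *v dmap F x j) = g x $ i $ j)"

definition sff ::
  "(real^'n::finite \<Rightarrow> real^'n^'n) \<Rightarrow> (real^'m::finite \<Rightarrow> real^'m^'m) \<Rightarrow>
   (real^'n \<Rightarrow> real^'m) \<Rightarrow> real^'n \<Rightarrow> 'n \<Rightarrow> 'n \<Rightarrow> 'm \<Rightarrow> real" where
  "sff g G F x i j \<gamma> =
     pd i (\<lambda>y. pd j (\<lambda>y'. F y' $ \<gamma>) y) x
     - (\<Sum>k\<in>UNIV. christoffel g x k i j * pd k (\<lambda>y. F y $ \<gamma>) x)
     + (\<Sum>\<alpha>\<in>UNIV. \<Sum>\<beta>\<in>UNIV. christoffel G (F x) \<gamma> \<alpha> \<beta> * dmap F x i $ \<alpha> * dmap F x j $ \<beta>)"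

definition tension ::
  "(real^'n::finite \<Rightarrow> real^'n^'n) \<Rightarrow> (real^'m::finite \<Rightarrow> real^'m^'m) \<Rightarrow>
   (real^'n \<Rightarrow> real^'m) \<Rightarrow> real^'n \<Rightarrow> 'm \<Rightarrow> real" where
  "tension g G F x \<gamma> = (\<Sum>i\<in>UNIV. \<Sum>j\<in>UNIV. matrix_inv (g x) $ i $ j * sff g G F x i j \<gamma>)"

definition totally_geodesic ::
  "(real^'n::finite) set \<Rightarrow> (real^'n \<Rightarrow> real^'n^'n) \<Rightarrow> (real^'m::finite \<Rightarrow> real^'m^'m) \<Rightarrow>
   (real^'n \<Rightarrow> real^'m) \<Rightarrow> bool" where
  "totally_geodesic U g G F \<longleftrightarrow> (\<forall>x\<in>U. \<forall>i j \<gamma>. sff g G F x i j \<gamma> = 0)"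

definition harmonic_map ::
  "(real^'n::finite) set \<Rightarrow> (real^'n \<Rightarrow> real^'n^'n) \<Rightarrow> (real^'m::finite \<Rightarrow> real^'m^'m) \<Rightarrow>
   (real^'n \<Rightarrow> real^'m) \<Rightarrow> bool" where
  "harmonic_map U g G F \<longleftrightarrow> (\<forall>x\<in>U. \<forall>\<gamma>. tension g G F x \<gamma> = 0)"

end

theory Submission
  imports Defs
begin



lemma pd_eqI: "((\<lambda>t. f (x + t *\<^sub>R axis i 1)) has_real_derivative D) (at 0) \<Longrightarrow> pd i f x = D"
  by (simp add: pd_def DERIV_imp_deriv)

lemma ev_line_in:
  fixes U :: "(real^'n::finite) set"
  assumes "open U" "x \<in> U"
  shows "\<forall>\<^sub>F t in nhds (0::real). x + t *\<^sub>R v \<in> U"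
proof -
  have "open ((\<lambda>t::real. x + t *\<^sub>R v) -` U)"
    by (rule continuous_open_vimage[OF assms(1)]) (intro continuous_intros)
  moreover have "0 \<in> (\<lambda>t::real. x + t *\<^sub>R v) -` U" using assms(2) by simp
  ultimately show ?thesis unfolding eventually_nhds by blast
qed

lemma pd_local:
  fixes U :: "(real^'n::finite) set"
  assumes "open U" "x \<in> U" "\<And>y. y \<in> U \<Longrightarrow> f y = h y"
  shows "pd i f x = pd i h x"
  unfolding pd_def
proof (rule deriv_cong_ev)
  show "\<forall>\<^sub>F t in nhds 0. f (x + t *\<^sub>R axis i 1) = h (x + t *\<^sub>R axis i 1)"
    using ev_line_in[OF assms(1,2), of "axis i 1"] by (rule eventually_mono) (simp add: assms(3))
qed simp

lemma Cinf_line: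
  assumes "Cinf_on U f" "x \<in> U"
  shows "((\<lambda>t. iter_pd is f (x + t *\<^sub>R axis i 1)) has_real_derivative pd i (iter_pd is f) x) (at 0)"
proof -
  have "(\<lambda>t. iter_pd is f (x + t *\<^sub>R axis i 1)) differentiable (at 0)"
    using assms unfolding Cinf_on_def by blast
  then show ?thesis unfolding pd_def by (simp add: DERIV_deriv_iff_real_differentiable)
qed

lemma Cinf_line0:
  assumes "Cinf_on U f" "x \<in> U"
  shows "((\<lambda>t. f (x + t *\<^sub>R axis i 1)) has_real_derivative pd i f x) (at 0)"
  using Cinf_line[OF assms, of "[]"] by simp

lemma Cinf_line1:
  assumes "Cinf_on U f" "x \<in> U"
  shows "((\<lambda>t. pd j f (x + t *\<^sub>R axis i 1)) has_real_derivative pd i (pd j f) x) (at 0)"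
  using Cinf_line[OF assms, of "[j]"] by simp

lemma line_shift:
  fixes e x :: "'a::real_normed_vector"
  assumes "((\<lambda>s. F ((x + t *\<^sub>R e) + s *\<^sub>R e)) has_real_derivative D) (at 0)"
  shows "((\<lambda>s. F (x + s *\<^sub>R e)) has_real_derivative D) (at t)"
proof -
  have eq: "x + (s + t) *\<^sub>R e = x + t *\<^sub>R e + s *\<^sub>R e" for s
    by (simp add: algebra_simps)
  have "((\<lambda>s. F (x + (s + t) *\<^sub>R e)) has_real_derivative D) (at 0)"
    using assms by (simp only: eq)
  then show ?thesis using DERIV_shift[of "\<lambda>s. F (x + s *\<^sub>R e)" D 0 t] by simp
qed

lemma mvt2d:
  fixes f :: "real^'n::finite \<Rightarrow> real"
  assumes U: "open U" and C: "Cinf_on U f" and h: "0 < h"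
    and B: "\<And>s t. 0 \<le> s \<Longrightarrow> s \<le> h \<Longrightarrow> 0 \<le> t \<Longrightarrow> t \<le> h \<Longrightarrow>
              x0 + s *\<^sub>R axis i 1 + t *\<^sub>R axis j 1 \<in> U"
  shows "\<exists>s t. 0 < s \<and> s < h \<and> 0 < t \<and> t < h \<and>
     f (x0 + h *\<^sub>R axis i 1 + h *\<^sub>R axis j 1) - f (x0 + h *\<^sub>R axis i 1)
       - f (x0 + h *\<^sub>R axis j 1) + f x0
     = h * h * pd j (pd i f) (x0 + s *\<^sub>R axis i 1 + t *\<^sub>R axis j 1)"
proof -
  define e1 where "e1 = axis i (1::real)"
  define e2 where "e2 = axis j (1::real)"
  define \<phi> where "\<phi> u = f (x0 + h *\<^sub>R e2 + u *\<^sub>R e1) - f (x0 + u *\<^sub>R e1)" for u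
  have d\<phi>: "(\<phi> has_real_derivative (pd i f (x0 + u *\<^sub>R e1 + h *\<^sub>R e2) - pd i f (x0 + u *\<^sub>R e1))) (at u)"
    if "0 \<le> u" "u \<le> h" for u
  proof -
    have m1: "x0 + u *\<^sub>R e1 + h *\<^sub>R e2 \<in> U" using B[of u h] that h unfolding e1_def e2_def by simp
    have m2: "x0 + u *\<^sub>R e1 \<in> U" using B[of u 0] that h unfolding e1_def e2_def by simp
    have a: "((\<lambda>s. f (x0 + h *\<^sub>R e2 + s *\<^sub>R e1)) has_real_derivative pd i f (x0 + u *\<^sub>R e1 + h *\<^sub>R e2)) (at u)"
      apply (rule line_shift)
      using Cinf_line0[OF C m1, of i] unfolding e1_def by (simp add: algebra_simps)
    have b: "((\<lambda>s. f (x0 + s *\<^sub>R e1)) has_real_derivative pd i f (x0 + u *\<^sub>R e1)) (at u)"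
      apply (rule line_shift)
      using Cinf_line0[OF C m2, of i] unfolding e1_def by (simp add: algebra_simps)
    show ?thesis unfolding \<phi>_def by (intro DERIV_diff a b)
  qed
  obtain s where s: "0 < s" "s < h"
    "\<phi> h - \<phi> 0 = (h - 0) * (pd i f (x0 + s *\<^sub>R e1 + h *\<^sub>R e2) - pd i f (x0 + s *\<^sub>R e1))"
    using MVT2[OF h, of \<phi> "\<lambda>u. pd i f (x0 + u *\<^sub>R e1 + h *\<^sub>R e2) - pd i f (x0 + u *\<^sub>R e1)"] d\<phi> by blast
  define \<psi> where "\<psi> w = pd i f (x0 + s *\<^sub>R e1 + w *\<^sub>R e2)" for w
  have d\<psi>: "(\<psi> has_real_derivative pd j (pd i f) (x0 + s *\<^sub>R e1 + w *\<^sub>R e2)) (at w)"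
    if "0 \<le> w" "w \<le> h" for w
  proof -
    have m: "x0 + s *\<^sub>R e1 + w *\<^sub>R e2 \<in> U" using B[of s w] that s unfolding e1_def e2_def by simp
    show ?thesis unfolding \<psi>_def
      apply (rule line_shift)
      using Cinf_line1[OF C m, where i=j and j=i] unfolding e2_def by (simp add: algebra_simps)
  qed
  obtain t where t: "0 < t" "t < h"
    "\<psi> h - \<psi> 0 = (h - 0) * pd j (pd i f) (x0 + s *\<^sub>R e1 + t *\<^sub>R e2)"
    using MVT2[OF h, of \<psi> "\<lambda>w. pd j (pd i f) (x0 + s *\<^sub>R e1 + w *\<^sub>R e2)"] d\<psi> by blast
  have "f (x0 + h *\<^sub>R e1 + h *\<^sub>R e2) - f (x0 + h *\<^sub>R e1) - f (x0 + h *\<^sub>R e2) + f x0 = \<phi> h - \<phi> 0"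
    unfolding \<phi>_def by (simp add: algebra_simps)
  also have "\<dots> = h * (\<psi> h - \<psi> 0)" using s(3) unfolding \<psi>_def by (simp add: algebra_simps)
  also have "\<dots> = h * h * pd j (pd i f) (x0 + s *\<^sub>R e1 + t *\<^sub>R e2)" using t(3) by simp
  finally show ?thesis using s t unfolding e1_def e2_def by blast
qed

lemma two_close: fixes a b c :: real shows "\<bar>c - a\<bar> < \<bar>a - b\<bar> / 2 \<Longrightarrow> \<bar>c - b\<bar> < \<bar>a - b\<bar> / 2 \<Longrightarrow> False"
  by (auto simp: abs_if split: if_splits)

lemma schwarz:
  fixes f :: "real^'n::finite \<Rightarrow> real"
  assumes U: "open U" and x0: "x0 \<in> U" and C: "Cinf_on U f"
  shows "pd i (pd j f) x0 = pd j (pd i f) x0"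
proof (rule ccontr)
  assume ne: "pd i (pd j f) x0 \<noteq> pd j (pd i f) x0"
  define a where "a = pd j (pd i f) x0"
  define b where "b = pd i (pd j f) x0"
  define e where "e = \<bar>a - b\<bar> / 2"
  have e: "e > 0" using ne unfolding e_def a_def b_def by simp
  obtain r where r: "r > 0" "ball x0 r \<subseteq> U" using U x0 open_contains_ball by blast
  have cij: "continuous_on U (pd i (pd j f))" "continuous_on U (pd j (pd i f))"
    using C unfolding Cinf_on_def by (metis iter_pd.simps)+
  have "isCont (pd j (pd i f)) x0" "isCont (pd i (pd j f)) x0"
    using cij U x0 continuous_on_eq_continuous_at by blast+
  then obtain d1 d2 where d1: "d1 > 0" "\<And>y. dist y x0 < d1 \<Longrightarrow> dist (pd j (pd i f) y) a < e"
    and d2: "d2 > 0" "\<And>y. dist y x0 < d2 \<Longrightarrow> dist (pd i (pd j f) y) b < e"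
    unfolding continuous_at_eps_delta a_def b_def using e by (metis dist_commute)
  define h where "h = min r (min d1 d2) / 3"
  have h: "h > 0" "2 * h < r" "2 * h < d1" "2 * h < d2" using r d1 d2 unfolding h_def by auto
  have nrm: "dist (x0 + s *\<^sub>R axis k 1 + t *\<^sub>R axis l 1) x0 < 2 * h"
    if "0 \<le> s" "s \<le> h" "0 \<le> t" "t \<le> h" "s < h" for s t and k l :: 'n
  proof -
    have "dist (x0 + s *\<^sub>R axis k 1 + t *\<^sub>R axis l 1) x0 = norm (s *\<^sub>R axis k (1::real) + t *\<^sub>R axis l 1)"
      by (simp add: dist_norm)
    also have "\<dots> \<le> norm (s *\<^sub>R axis k (1::real)) + norm (t *\<^sub>R axis l (1::real))" by (rule norm_triangle_ineq)
    also have "\<dots> = s + t" using that by simp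
    finally show ?thesis using that by linarith
  qed
  have nrm': "dist (x0 + s *\<^sub>R axis k 1 + t *\<^sub>R axis l 1) x0 < r"
    if "0 \<le> s" "s \<le> h" "0 \<le> t" "t \<le> h" for s t and k l :: 'n
  proof -
    have "dist (x0 + s *\<^sub>R axis k 1 + t *\<^sub>R axis l 1) x0 = norm (s *\<^sub>R axis k (1::real) + t *\<^sub>R axis l 1)"
      by (simp add: dist_norm)
    also have "\<dots> \<le> norm (s *\<^sub>R axis k (1::real)) + norm (t *\<^sub>R axis l (1::real))" by (rule norm_triangle_ineq)
    also have "\<dots> = s + t" using that by simp
    finally show ?thesis using that h by linarith
  qed
  have inU: "x0 + s *\<^sub>R axis k 1 + t *\<^sub>R axis l 1 \<in> U"
    if "0 \<le> s" "s \<le> h" "0 \<le> t" "t \<le> h" for s t and k l :: 'n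
    using nrm'[OF that] r(2) by (auto simp: dist_commute)
  obtain s1 t1 where st1: "0 < s1" "s1 < h" "0 < t1" "t1 < h"
    "f (x0 + h *\<^sub>R axis i 1 + h *\<^sub>R axis j 1) - f (x0 + h *\<^sub>R axis i 1)
       - f (x0 + h *\<^sub>R axis j 1) + f x0
     = h * h * pd j (pd i f) (x0 + s1 *\<^sub>R axis i 1 + t1 *\<^sub>R axis j 1)"
    using mvt2d[OF U C h(1), of x0 i j, OF inU] by blast
  obtain s2 t2 where st2: "0 < s2" "s2 < h" "0 < t2" "t2 < h"
    "f (x0 + h *\<^sub>R axis j 1 + h *\<^sub>R axis i 1) - f (x0 + h *\<^sub>R axis j 1)
       - f (x0 + h *\<^sub>R axis i 1) + f x0
     = h * h * pd i (pd j f) (x0 + s2 *\<^sub>R axis j 1 + t2 *\<^sub>R axis i 1)"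
    using mvt2d[OF U C h(1), of x0 j i, OF inU] by blast
  have "h * h * pd j (pd i f) (x0 + s1 *\<^sub>R axis i 1 + t1 *\<^sub>R axis j 1)
      = h * h * pd i (pd j f) (x0 + s2 *\<^sub>R axis j 1 + t2 *\<^sub>R axis i 1)"
    using st1(5) st2(5) by (simp add: algebra_simps)
  then have eq: "pd j (pd i f) (x0 + s1 *\<^sub>R axis i 1 + t1 *\<^sub>R axis j 1)
      = pd i (pd j f) (x0 + s2 *\<^sub>R axis j 1 + t2 *\<^sub>R axis i 1)" using h(1) by simp
  have "dist (pd j (pd i f) (x0 + s1 *\<^sub>R axis i 1 + t1 *\<^sub>R axis j 1)) a < e"
    apply (rule d1(2)) using nrm[of s1 t1 i j] st1 h by linarith
  moreover have "dist (pd i (pd j f) (x0 + s2 *\<^sub>R axis j 1 + t2 *\<^sub>R axis i 1)) b < e"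
    apply (rule d2(2)) using nrm[of s2 t2 j i] st2 h by linarith
  ultimately show False using eq two_close unfolding e_def dist_real_def by metis
qed



lemma lin_expand: "linear (f::real^'m::finite \<Rightarrow> real) \<Longrightarrow> f W = (\<Sum>a\<in>UNIV. W$a * f (axis a 1))"
proof -
  assume l: "linear f"
  have "f W = f (\<Sum>a\<in>UNIV. W$a *\<^sub>R axis a 1)" using basis_expansion[of W] by (simp add: scalar_mult_eq_scaleR)
  also have "\<dots> = (\<Sum>a\<in>UNIV. W$a * f (axis a 1))" using l by (simp add: linear_sum linear_scale)
  finally show ?thesis .
qed

lemma sum_axis_l[simp]: "(\<Sum>a\<in>UNIV. f a * (axis i (1::real) $ a)) = f i"
proof -
  have "f a * (axis i (1::real) $ a) = (if a = i then f i else 0)" for a by (simp add: axis_def)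
  then show ?thesis by (simp add: sum.delta)
qed
lemma sum_axis_l2[simp]: "(\<Sum>a\<in>UNIV. f a * (axis i (1::real) $ a) * c) = f i * c"
proof -
  have "f a * (axis i (1::real) $ a) * c = (if a = i then f i * c else 0)" for a by (simp add: axis_def)
  then show ?thesis by (simp add: sum.delta)
qed

lemma sum_Plus_UNIV: "(\<Sum>a\<in>(UNIV::('a::finite + 'b::finite) set). f a) = (\<Sum>a\<in>UNIV. f (Inl a)) + (\<Sum>b\<in>UNIV. f (Inr b))"
  using sum.Plus[of "UNIV::'a set" "UNIV::'b set" f] by (simp add: o_def)

lemma xpart_tvec[simp]: "xpart (tvec a b) = a" by (simp add: xpart_def tvec_def vec_eq_iff)
lemma ypart_tvec[simp]: "ypart (tvec a b) = b" by (simp add: ypart_def tvec_def vec_eq_iff)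
lemma xpart_add[simp]: "xpart (W + W') = xpart W + xpart W'" by (simp add: xpart_def vec_eq_iff)
lemma ypart_add[simp]: "ypart (W + W') = ypart W + ypart W'" by (simp add: ypart_def vec_eq_iff)
lemma xpart_scale[simp]: "xpart (c *\<^sub>R W) = c *\<^sub>R xpart W" by (simp add: xpart_def vec_eq_iff)
lemma ypart_scale[simp]: "ypart (c *\<^sub>R W) = c *\<^sub>R ypart W" by (simp add: ypart_def vec_eq_iff)
lemma xpart_Inl[simp]: "xpart (axis (Inl a) 1 :: real^('n::finite+'n)) = axis a 1"
  by (simp add: xpart_def vec_eq_iff axis_def)
lemma xpart_Inr[simp]: "xpart (axis (Inr a) 1 :: real^('n::finite+'n)) = 0"
  by (simp add: xpart_def vec_eq_iff axis_def)
lemma ypart_Inl[simp]: "ypart (axis (Inl a) 1 :: real^('n::finite+'n)) = 0"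
  by (simp add: ypart_def vec_eq_iff axis_def)
lemma ypart_Inr[simp]: "ypart (axis (Inr a) 1 :: real^('n::finite+'n)) = axis a 1"
  by (simp add: ypart_def vec_eq_iff axis_def)
lemma xpart_0[simp]: "xpart 0 = 0" by (simp add: xpart_def vec_eq_iff)
lemma ypart_0[simp]: "ypart 0 = 0" by (simp add: ypart_def vec_eq_iff)

lemma vcomp_add: "vcomp g z (W + W') = vcomp g z W + vcomp g z W'"
  by (simp add: vcomp_def vec_eq_iff algebra_simps sum.distrib)
lemma vcomp_scale: "vcomp g z (c *\<^sub>R W) = c *\<^sub>R vcomp g z W"
  by (simp add: vcomp_def vec_eq_iff algebra_simps sum_distrib_left)

lemmas mv_add = linear_add[OF matrix_vector_mul_linear]
lemmas mv_scale = linear_scale[OF matrix_vector_mul_linear]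

lemma lin_gBS1: "linear (\<lambda>W. gBS_form g phi \<delta> z W W')"
  by (rule linearI) (simp_all add: gBS_form_def Let_def inner_add_left vcomp_add vcomp_scale algebra_simps)
lemma lin_gBS2: "linear (\<lambda>W'. gBS_form g phi \<delta> z W W')"
  by (rule linearI) (simp_all add: gBS_form_def Let_def inner_add_right vcomp_add vcomp_scale mv_add mv_scale algebra_simps)

lemma gBS_bil_expand: "gBS_form g phi \<delta> z W W' = (\<Sum>a\<in>UNIV. \<Sum>b\<in>UNIV. W$a * W'$b * gBS_form g phi \<delta> z (axis a 1) (axis b 1))"
proof -
  have "gBS_form g phi \<delta> z W W' = (\<Sum>a\<in>UNIV. W$a * gBS_form g phi \<delta> z (axis a 1) W')"
    by (rule lin_expand[OF lin_gBS1])
  also have "\<dots> = (\<Sum>a\<in>UNIV. W$a * (\<Sum>b\<in>UNIV. W'$b * gBS_form g phi \<delta> z (axis a 1) (axis b 1)))"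
    by (subst lin_expand[OF lin_gBS2]) (rule refl)
  finally show ?thesis by (simp add: sum_distrib_left mult.assoc)
qed

lemma gBS_bil: "W \<bullet> (gBS g phi \<delta> z *v W') = gBS_form g phi \<delta> z W W'"
  unfolding gBS_bil_expand[of g phi \<delta> z W W']
  by (simp add: inner_vec_def matrix_vector_mult_def gBS_def sum_distrib_left mult_ac)

lemma gBS_mv: "(gBS g phi \<delta> z *v W') $ a = gBS_form g phi \<delta> z (axis a 1) W'"
  using gBS_bil[of "axis a 1" g phi \<delta> z W'] by (simp add: inner_axis')

lemma pd_coord: "pd i (\<lambda>y. y $ a) x = (if a = i then 1 else 0)"
proof (rule pd_eqI)
  have "((\<lambda>t. x $ a + t * axis i 1 $ a) has_real_derivative (axis i 1 $ a)) (at 0)"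
    by (auto intro!: derivative_eq_intros)
  then show "((\<lambda>t. (x + t *\<^sub>R axis i 1) $ a) has_real_derivative (if a = i then 1 else 0)) (at 0)"
    by (simp add: axis_def)
qed

lemma dmap_sec: "dmap (section_map \<xi>) x i = tvec (axis i 1) (\<chi> k. pd i (\<lambda>y. \<xi> y $ k) x)"
  unfolding vec_eq_iff
proof
  fix c :: "'a + 'a"
  show "dmap (section_map \<xi>) x i $ c = tvec (axis i 1) (\<chi> k. pd i (\<lambda>y. \<xi> y $ k) x) $ c"
    by (cases c) (simp_all add: dmap_def section_map_def tvec_def pd_coord axis_def)
qed

lemma vcomp_axis: "vcomp g z (tvec (axis i 1) b) = (\<chi> k. b $ k + (\<Sum>j\<in>UNIV. christoffel g (xpart z) k i j * ypart z $ j))"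
proof -
  have "(\<Sum>a\<in>UNIV. \<Sum>j\<in>UNIV. christoffel g (xpart z) k a j * axis i 1 $ a * ypart z $ j)
       = (\<Sum>j\<in>UNIV. christoffel g (xpart z) k i j * ypart z $ j)" for k
    by (subst sum.swap) simp
  then show ?thesis by (simp add: vcomp_def)
qed

lemma gform_axis_xx: "axis i 1 \<bullet> (M *v axis i (1::real)) = M $ i $ i"
  by (simp add: inner_axis' matrix_vector_mult_basis column_def)

lemma nabla_xi:
  assumes ap: "anti_paraKaehler U g phi k"
    and iso: "isometric_immersion U g (gBS g phi \<delta>) (section_map \<xi>)" and x: "x \<in> U"
  shows "pd i (\<lambda>y. \<xi> y $ m) x = - (\<Sum>b\<in>UNIV. christoffel g x m i b * \<xi> x $ b)"
proof -
  define W where "W = dmap (section_map \<xi>) x i"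
  define z where "z = section_map \<xi> x"
  have xz: "xpart z = x" "ypart z = \<xi> x" by (simp_all add: z_def section_map_def)
  define v where "v = vcomp g z W"
  define s where "s = g x *v (phi x *v \<xi> x)"
  have "W \<bullet> (gBS g phi \<delta> z *v W) = g x $ i $ i"
    using iso x unfolding isometric_immersion_def W_def z_def by blast
  then have "gBS_form g phi \<delta> z W W = g x $ i $ i" by (simp add: gBS_bil)
  moreover have "xpart W = axis i 1" by (simp add: W_def dmap_sec)
  ultimately have e0: "v \<bullet> (g x *v v) + \<delta>\<^sup>2 * (v \<bullet> s) * (v \<bullet> s) = 0"
    by (simp add: gBS_form_def Let_def xz v_def s_def gform_axis_xx)
  have pos: "\<forall>w. w \<noteq> 0 \<longrightarrow> w \<bullet> (g x *v w) > 0"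
    using ap x unfolding anti_paraKaehler_def riemannian_metric_on_def by blast
  have "\<delta>\<^sup>2 * (v \<bullet> s) * (v \<bullet> s) \<ge> 0" using mult_nonneg_nonneg[OF zero_le_power2[of \<delta>] zero_le_square[of "v \<bullet> s"]] by (simp add: mult.assoc)
  then have "v = 0" using e0 pos by (metis add_pos_nonneg less_irrefl)
  then have "v $ m = 0" by simp
  moreover have "v $ m = pd i (\<lambda>y. \<xi> y $ m) x + (\<Sum>b\<in>UNIV. christoffel g x m i b * \<xi> x $ b)"
    by (simp add: v_def W_def dmap_sec vcomp_axis xz)
  ultimately show ?thesis by linarith
qed



lemma posdef_invertible:
  fixes M :: "real^'m::finite^'m"
  assumes "\<forall>w. w \<noteq> 0 \<longrightarrow> w \<bullet> (M *v w) > 0"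
  shows "invertible M"
proof -
  have "inj ((*v) M)"
  proof (rule injI)
    fix w w' assume "M *v w = M *v w'"
    then have "M *v (w - w') = 0" by (simp add: matrix_vector_mult_diff_distrib)
    then show "w = w'" using assms by (metis inner_zero_right less_irrefl right_minus_eq)
  qed
  then have "det M \<noteq> 0"
    using det_nz_iff_inj[OF matrix_vector_mul_linear[of M]] by (simp add: matrix_of_matrix_vector_mul)
  then show ?thesis by (simp add: invertible_det_nz)
qed

lemma matrix_inv_props:
  assumes "invertible (A::real^'m::finite^'m)"
  shows "A ** matrix_inv A = mat 1" "matrix_inv A ** A = mat 1"
proof -
  have "\<exists>A'. A ** A' = mat 1 \<and> A' ** A = mat 1" using assms unfolding invertible_def by blast
  then have "A ** matrix_inv A = mat 1 \<and> matrix_inv A ** A = mat 1"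
    unfolding matrix_inv_def by (rule someI_ex)
  then show "A ** matrix_inv A = mat 1" "matrix_inv A ** A = mat 1" by auto
qed

lemma matrix_inv_cramer:
  assumes "invertible (A::real^'m::finite^'m)"
  shows "matrix_inv A $ k $ l = det (\<chi> r s. if s = k then axis l 1 $ r else A$r$s) / det A"
proof -
  have d: "det A \<noteq> 0" using assms invertible_det_nz by blast
  have "A *v (matrix_inv A *v axis l 1) = axis l 1"
    by (simp add: matrix_vector_mul_assoc matrix_inv_props(1)[OF assms])
  then have "matrix_inv A *v axis l 1 = (\<chi> k. det (\<chi> r s. if s = k then axis l 1 $ r else A$r$s) / det A)"
    using cramer[OF d] by blast
  then have "(matrix_inv A *v axis l 1) $ k = det (\<chi> r s. if s = k then axis l 1 $ r else A$r$s) / det A"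
    by simp
  then show ?thesis by (simp add: matrix_vector_mult_basis column_def)
qed

lemma differentiable_prod':
  fixes f :: "'i \<Rightarrow> real \<Rightarrow> real"
  assumes "finite I" "\<And>i. i \<in> I \<Longrightarrow> f i differentiable (at x)"
  shows "(\<lambda>t. \<Prod>i\<in>I. f i t) differentiable (at x)"
  using assms
proof (induction I rule: finite_induct)
  case empty then show ?case by simp
next
  case (insert a F)
  then show ?case by (simp add: differentiable_mult)
qed

lemma det_differentiable:
  fixes M :: "real \<Rightarrow> real^'m::finite^'m"
  assumes "\<And>r s. (\<lambda>t. M t $ r $ s) differentiable (at x)"
  shows "(\<lambda>t. det (M t)) differentiable (at x)"
  unfolding det_def
proof (rule differentiable_sum)
  show "finite {p. p permutes (UNIV::'m set)}" by (rule finite_permutations) simp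
  show "\<forall>p\<in>{p. p permutes UNIV}. (\<lambda>t. of_int (sign p) * (\<Prod>i\<in>UNIV. M t $ i $ p i)) differentiable (at x)"
  proof
    fix p :: "'m \<Rightarrow> 'm"
    have "(\<lambda>t. \<Prod>i\<in>UNIV. M t $ i $ p i) differentiable (at x)"
      by (rule differentiable_prod') (simp_all add: assms)
    then show "(\<lambda>t. of_int (sign p) * (\<Prod>i\<in>UNIV. M t $ i $ p i)) differentiable (at x)"
      by (rule differentiable_mult[OF differentiable_const])
  qed
qed

lemma differentiable_cong_ev:
  fixes f h :: "real \<Rightarrow> real"
  assumes "f differentiable (at x)" "\<forall>\<^sub>F t in nhds x. f t = h t"
  shows "h differentiable (at x)"
proof -
  have "DERIV f x :> deriv f x" using assms(1) by (simp add: DERIV_deriv_iff_real_differentiable)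
  then have "DERIV h x :> deriv f x"
    using DERIV_cong_ev[OF refl assms(2) refl] by simp
  then show ?thesis by (auto simp: real_differentiable_def)
qed

lemma metric_facts:
  assumes "riemannian_metric_on U g" "x \<in> U"
  shows "transpose (g x) = g x" "\<forall>v. v \<noteq> 0 \<longrightarrow> v \<bullet> (g x *v v) > 0" "invertible (g x)"
  using assms posdef_invertible unfolding riemannian_metric_on_def by blast+

lemma Cinf_diff0:
  assumes "Cinf_on U f" "x \<in> U"
  shows "(\<lambda>t. f (x + t *\<^sub>R axis i 1)) differentiable (at 0)"
  using assms unfolding Cinf_on_def by (metis iter_pd.simps(1))

lemma Cinf_diff1:
  assumes "Cinf_on U f" "x \<in> U"
  shows "(\<lambda>t. pd j f (x + t *\<^sub>R axis i 1)) differentiable (at 0)"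
  using assms unfolding Cinf_on_def by (metis iter_pd.simps)

lemma ginv_diff:
  assumes U: "open U" and R: "riemannian_metric_on U g" and x: "x \<in> U"
  shows "(\<lambda>t. matrix_inv (g (x + t *\<^sub>R axis c 1)) $ k $ l) differentiable (at 0)"
proof -
  define M where "M t = (\<chi> r s. if s = k then axis l 1 $ r else g (x + t *\<^sub>R axis c 1) $r$s)" for t
  have gd: "(\<lambda>t. g (x + t *\<^sub>R axis c 1) $ r $ s) differentiable (at 0)" for r s
  proof -
    have "Cinf_on U (\<lambda>x. g x $ r $ s)" using R unfolding riemannian_metric_on_def by blast
    from Cinf_diff0[OF this x] show ?thesis .
  qed
  have Md: "(\<lambda>t. M t $ r $ s) differentiable (at 0)" for r s
  proof (cases "s = k")
    case True then show ?thesis by (simp add: M_def)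
  next
    case False then show ?thesis using gd by (simp add: M_def)
  qed
  have d1: "(\<lambda>t. det (M t)) differentiable (at 0)" by (rule det_differentiable) (rule Md)
  have d2: "(\<lambda>t. det (g (x + t *\<^sub>R axis c 1))) differentiable (at 0)" by (rule det_differentiable) (rule gd)
  have d3: "det (g (x + 0 *\<^sub>R axis c 1)) \<noteq> 0" using metric_facts(3)[OF R x] by (simp add: invertible_det_nz)
  have "(\<lambda>t. det (M t) / det (g (x + t *\<^sub>R axis c 1))) differentiable (at 0)"
    using differentiable_divide[OF d1 d2 d3] .
  moreover have "\<forall>\<^sub>F t in nhds 0. det (M t) / det (g (x + t *\<^sub>R axis c 1)) = matrix_inv (g (x + t *\<^sub>R axis c 1)) $ k $ l"
    using ev_line_in[OF U x, of "axis c 1"]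
  proof (rule eventually_mono)
    fix t assume "x + t *\<^sub>R axis c 1 \<in> U"
    then have "invertible (g (x + t *\<^sub>R axis c 1))" using metric_facts(3)[OF R] by blast
    from matrix_inv_cramer[OF this, of k l] show "det (M t) / det (g (x + t *\<^sub>R axis c 1)) = matrix_inv (g (x + t *\<^sub>R axis c 1)) $ k $ l"
      unfolding M_def by simp
  qed
  ultimately show ?thesis by (rule differentiable_cong_ev)
qed

lemma christoffel_diff:
  assumes U: "open U" and R: "riemannian_metric_on U g" and x: "x \<in> U"
  shows "(\<lambda>t. christoffel g (x + t *\<^sub>R axis c 1) k i j) differentiable (at 0)"
proof -
  have pdd: "(\<lambda>t. pd a (\<lambda>y. g y $ r $ s) (x + t *\<^sub>R axis c 1)) differentiable (at 0)" for a r s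
  proof -
    have "Cinf_on U (\<lambda>x. g x $ r $ s)" using R unfolding riemannian_metric_on_def by blast
    from Cinf_diff1[OF this x] show ?thesis .
  qed
  show ?thesis unfolding christoffel_def
    by (intro differentiable_mult differentiable_const differentiable_sum ballI finite_UNIV
        differentiable_diff differentiable_add ginv_diff[OF U R x] pdd) simp_all
qed

lemma christoffel_lower:
  assumes R: "riemannian_metric_on U g" and x: "x \<in> U"
  shows "(\<Sum>a\<in>UNIV. g x $ m $ a * christoffel g x a i j)
     = (1/2) * (pd i (\<lambda>y. g y $ j $ m) x + pd j (\<lambda>y. g y $ i $ m) x - pd m (\<lambda>y. g y $ i $ j) x)"
proof -
  define S where "S l = pd i (\<lambda>y. g y $ j $ l) x + pd j (\<lambda>y. g y $ i $ l) x - pd l (\<lambda>y. g y $ i $ j) x" for l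
  have I: "g x ** matrix_inv (g x) = mat 1" using matrix_inv_props(1)[OF metric_facts(3)[OF R x]] .
  have "(\<Sum>a\<in>UNIV. g x $ m $ a * christoffel g x a i j)
      = (\<Sum>a\<in>UNIV. \<Sum>l\<in>UNIV. (1/2) * (g x $ m $ a * matrix_inv (g x) $ a $ l * S l))"
    unfolding christoffel_def S_def by (simp add: sum_distrib_left mult_ac)
  also have "\<dots> = (\<Sum>l\<in>UNIV. \<Sum>a\<in>UNIV. (1/2) * (g x $ m $ a * matrix_inv (g x) $ a $ l * S l))"
    by (rule sum.swap)
  also have "\<dots> = (1/2) * (\<Sum>l\<in>UNIV. (\<Sum>a\<in>UNIV. g x $ m $ a * matrix_inv (g x) $ a $ l) * S l)"
    by (simp add: sum_distrib_left sum_distrib_right)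
  also have "\<dots> = (1/2) * (\<Sum>l\<in>UNIV. (mat 1 :: real^'a^'a) $ m $ l * S l)"
    unfolding I[symmetric] by (simp add: matrix_matrix_mult_def)
  also have "\<dots> = (1/2) * S m"
  proof -
    have "(mat 1::real^'a^'a) $ m $ l * S l = (if m = l then S l else 0)" for l by (simp add: mat_def)
    then show ?thesis by simp
  qed
  finally show ?thesis unfolding S_def .
qed



definition md :: "(real \<Rightarrow> real^'n::finite^'n) \<Rightarrow> real^'n^'n \<Rightarrow> bool" where
  "md M M' \<longleftrightarrow> (\<forall>a b. ((\<lambda>t. M t $ a $ b) has_real_derivative M' $ a $ b) (at 0))"
definition vd :: "(real \<Rightarrow> real^'n::finite) \<Rightarrow> real^'n \<Rightarrow> bool" where
  "vd w w' \<longleftrightarrow> (\<forall>a. ((\<lambda>t. w t $ a) has_real_derivative w' $ a) (at 0))"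

definition VV :: "('n::finite \<Rightarrow> 'n \<Rightarrow> 'n \<Rightarrow> real) \<Rightarrow> real^'n \<Rightarrow> real^('n+'n) \<Rightarrow> real^'n" where
  "VV C Y P = (\<chi> k. ypart P $ k + (\<Sum>a\<in>UNIV. \<Sum>b\<in>UNIV. C k a b * xpart P $ a * Y $ b))"
definition dVV :: "('n::finite \<Rightarrow> 'n \<Rightarrow> 'n \<Rightarrow> real) \<Rightarrow> ('n \<Rightarrow> 'n \<Rightarrow> 'n \<Rightarrow> real) \<Rightarrow> real^'n \<Rightarrow> real^'n \<Rightarrow> real^('n+'n) \<Rightarrow> real^'n" where
  "dVV C C' Y Y' P = (\<chi> k. (\<Sum>a\<in>UNIV. \<Sum>b\<in>UNIV. C' k a b * xpart P $ a * Y $ b + C k a b * xpart P $ a * Y' $ b))"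

definition EE :: "real \<Rightarrow> real^'n::finite^'n \<Rightarrow> ('n \<Rightarrow> 'n \<Rightarrow> 'n \<Rightarrow> real) \<Rightarrow> real^'n^'n \<Rightarrow> real^'n
   \<Rightarrow> real^('n+'n) \<Rightarrow> real^('n+'n) \<Rightarrow> real" where
  "EE \<delta> G C \<Phi> Y P Q = xpart P \<bullet> (G *v xpart Q) + VV C Y P \<bullet> (G *v VV C Y Q)
     + \<delta>\<^sup>2 * (VV C Y P \<bullet> (G *v (\<Phi> *v Y))) * (VV C Y Q \<bullet> (G *v (\<Phi> *v Y)))"

definition dEE where
  "dEE \<delta> G G' C C' \<Phi> \<Phi>' Y Y' P Q =
    (let VP = VV C Y P; VQ = VV C Y Q; VP' = dVV C C' Y Y' P; VQ' = dVV C C' Y Y' Q;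
         S = G *v (\<Phi> *v Y); S' = G' *v (\<Phi> *v Y) + G *v (\<Phi>' *v Y + \<Phi> *v Y') in
     xpart P \<bullet> (G' *v xpart Q) + (VP' \<bullet> (G *v VQ) + VP \<bullet> (G' *v VQ + G *v VQ'))
     + \<delta>\<^sup>2 * ((VP' \<bullet> S + VP \<bullet> S') * (VQ \<bullet> S) + (VP \<bullet> S) * (VQ' \<bullet> S + VQ \<bullet> S')))"

lemma gBS_form_EE: "gBS_form g phi \<delta> z P Q =
   EE \<delta> (g (xpart z)) (christoffel g (xpart z)) (phi (xpart z)) (ypart z) P Q"
  by (simp add: gBS_form_def EE_def Let_def vcomp_def VV_def)

lemma vd_const: "vd (\<lambda>t. c) 0" by (simp add: vd_def)
lemma md_const: "md (\<lambda>t. c) 0" by (simp add: md_def)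

lemma vd_add: "vd u u' \<Longrightarrow> vd w w' \<Longrightarrow> vd (\<lambda>t. u t + w t) (u' + w')"
  by (auto simp: vd_def intro!: DERIV_add)

lemma vd_mv: assumes "md M M'" "vd w w'"
  shows "vd (\<lambda>t. M t *v w t) (M' *v w 0 + M 0 *v w')"
  unfolding vd_def
proof
  fix a
  have "((\<lambda>t. \<Sum>b\<in>UNIV. M t $ a $ b * w t $ b) has_real_derivative
          (\<Sum>b\<in>UNIV. M' $ a $ b * w 0 $ b + M 0 $ a $ b * w' $ b)) (at 0)"
    using assms unfolding md_def vd_def
    apply -
    apply (rule DERIV_cong)
     apply (rule DERIV_sum)
     apply (rule DERIV_mult)
      apply blast
     apply blast
    apply (simp add: mult_ac)
    done
  then show "((\<lambda>t. (M t *v w t) $ a) has_real_derivative (M' *v w 0 + M 0 *v w') $ a) (at 0)"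
    by (simp add: matrix_vector_mult_def sum.distrib)
qed

lemma d_inner: assumes "vd u u'" "vd w w'"
  shows "((\<lambda>t. u t \<bullet> w t) has_real_derivative (u' \<bullet> w 0 + u 0 \<bullet> w')) (at 0)"
proof -
  have "((\<lambda>t. \<Sum>a\<in>UNIV. u t $ a * w t $ a) has_real_derivative
          (\<Sum>a\<in>UNIV. u' $ a * w 0 $ a + u 0 $ a * w' $ a)) (at 0)"
    using assms unfolding vd_def
    apply -
    apply (rule DERIV_cong)
     apply (rule DERIV_sum)
     apply (rule DERIV_mult)
      apply blast
     apply blast
    apply (simp add: mult_ac)
    done
  then show ?thesis by (simp add: inner_vec_def sum.distrib)
qed

lemma vd_VV: assumes C: "\<And>k a b. ((\<lambda>t. Cc t k a b) has_real_derivative C' k a b) (at 0)" and Y: "vd Y Y'"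
  shows "vd (\<lambda>t. VV (Cc t) (Y t) P) (dVV (Cc 0) C' (Y 0) Y' P)"
  unfolding vd_def
proof
  fix k
  have Yd: "\<And>b. ((\<lambda>t. Y t $ b) has_real_derivative Y' $ b) (at 0)" using Y unfolding vd_def by blast
  have "((\<lambda>t. ypart P $ k + (\<Sum>a\<in>UNIV. \<Sum>b\<in>UNIV. Cc t k a b * xpart P $ a * Y t $ b)) has_real_derivative
     (\<Sum>a\<in>UNIV. \<Sum>b\<in>UNIV. C' k a b * xpart P $ a * Y 0 $ b + Cc 0 k a b * xpart P $ a * Y' $ b)) (at 0)"
    apply (rule DERIV_cong)
     apply (rule DERIV_add)
      apply (rule DERIV_const)
     apply (rule DERIV_sum)
     apply (rule DERIV_sum)
     apply (rule DERIV_mult)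
      apply (rule DERIV_mult)
       apply (rule C)
      apply (rule DERIV_const)
     apply (rule Yd)
    apply (simp add: mult_ac)
    done
  then show "((\<lambda>t. VV (Cc t) (Y t) P $ k) has_real_derivative dVV (Cc 0) C' (Y 0) Y' P $ k) (at 0)"
    by (simp add: VV_def dVV_def)
qed

lemma EE_deriv:
  assumes G: "md G G'" and P: "md \<Phi> \<Phi>'" and Y: "vd Y Y'"
    and C: "\<And>k a b. ((\<lambda>t. Cc t k a b) has_real_derivative C' k a b) (at 0)"
  shows "((\<lambda>t. EE \<delta> (G t) (Cc t) (\<Phi> t) (Y t) P Q) has_real_derivative
           dEE \<delta> (G 0) G' (Cc 0) C' (\<Phi> 0) \<Phi>' (Y 0) Y' P Q) (at 0)"
proof -
  have vP: "vd (\<lambda>t. VV (Cc t) (Y t) P) (dVV (Cc 0) C' (Y 0) Y' P)" by (rule vd_VV[OF C Y])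
  have vQ: "vd (\<lambda>t. VV (Cc t) (Y t) Q) (dVV (Cc 0) C' (Y 0) Y' Q)" by (rule vd_VV[OF C Y])
  have xQ: "vd (\<lambda>t. G t *v xpart Q) (G' *v xpart Q + G 0 *v 0)"
    by (rule vd_mv[OF G vd_const])
  have GvQ: "vd (\<lambda>t. G t *v VV (Cc t) (Y t) Q) (G' *v VV (Cc 0) (Y 0) Q + G 0 *v dVV (Cc 0) C' (Y 0) Y' Q)"
    by (rule vd_mv[OF G vQ])
  have PY: "vd (\<lambda>t. \<Phi> t *v Y t) (\<Phi>' *v Y 0 + \<Phi> 0 *v Y')" by (rule vd_mv[OF P Y])
  have S: "vd (\<lambda>t. G t *v (\<Phi> t *v Y t)) (G' *v (\<Phi> 0 *v Y 0) + G 0 *v (\<Phi>' *v Y 0 + \<Phi> 0 *v Y'))"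
    using vd_mv[OF G PY] by simp
  have d1: "((\<lambda>t. xpart P \<bullet> (G t *v xpart Q)) has_real_derivative
      (0 \<bullet> (G 0 *v xpart Q) + xpart P \<bullet> (G' *v xpart Q + G 0 *v 0))) (at 0)"
    by (rule d_inner[OF vd_const xQ])
  note d2 = d_inner[OF vP GvQ]
  note d3 = d_inner[OF vP S]
  note d4 = d_inner[OF vQ S]
  show ?thesis
    unfolding EE_def dEE_def Let_def
    apply (rule DERIV_cong)
     apply (rule DERIV_add)
      apply (rule DERIV_add)
       apply (rule d1)
      apply (rule d2)
     apply (rule DERIV_mult)
      apply (rule DERIV_mult)
       apply (rule DERIV_const)
      apply (rule d3)
     apply (rule d4)
    apply (simp add: algebra_simps)
    done
qed




lemma xpart_line_Inl[simp]: "xpart (z + t *\<^sub>R axis (Inl c) 1) = xpart z + t *\<^sub>R axis c 1" by simp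
lemma ypart_line_Inl[simp]: "ypart (z + t *\<^sub>R axis (Inl c) 1) = ypart z" by simp
lemma xpart_line_Inr[simp]: "xpart (z + t *\<^sub>R axis (Inr c) 1) = xpart z" by simp
lemma ypart_line_Inr[simp]: "ypart (z + t *\<^sub>R axis (Inr c) 1) = ypart z + t *\<^sub>R axis c 1" by simp

definition dG where
  "dG g phi \<delta> \<mu> z P Q = (case \<mu> of
     Inl c \<Rightarrow> dEE \<delta> (g (xpart z)) (\<chi> a b. pd c (\<lambda>y. g y $ a $ b) (xpart z)) (christoffel g (xpart z))
              (\<lambda>k a b. pd c (\<lambda>y. christoffel g y k a b) (xpart z)) (phi (xpart z))
              (\<chi> a b. pd c (\<lambda>y. phi y $ a $ b) (xpart z)) (ypart z) 0 P Q
   | Inr c \<Rightarrow> dEE \<delta> (g (xpart z)) 0 (christoffel g (xpart z)) (\<lambda>k a b. 0) (phi (xpart z)) 0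
              (ypart z) (axis c 1) P Q)"

lemma apk_facts:
  assumes "anti_paraKaehler U g phi k"
  shows "riemannian_metric_on U g" "\<And>a b. Cinf_on U (\<lambda>x. g x $ a $ b)" "\<And>a b. Cinf_on U (\<lambda>x. phi x $ a $ b)"
  using assms unfolding anti_paraKaehler_def riemannian_metric_on_def by blast+

lemma lineG_Inl:
  assumes U: "open U" and ap: "anti_paraKaehler U g phi k" and z: "xpart z \<in> U"
  shows "((\<lambda>t. gBS_form g phi \<delta> (z + t *\<^sub>R axis (Inl c) 1) P Q) has_real_derivative dG g phi \<delta> (Inl c) z P Q) (at 0)"
proof -
  define x where "x = xpart z"
  have R: "riemannian_metric_on U g" using apk_facts[OF ap] by blast
  have G: "md (\<lambda>t. g (x + t *\<^sub>R axis c 1)) (\<chi> a b. pd c (\<lambda>y. g y $ a $ b) x)"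
    unfolding md_def using Cinf_line0[OF apk_facts(2)[OF ap] z[folded x_def]] by simp
  have P: "md (\<lambda>t. phi (x + t *\<^sub>R axis c 1)) (\<chi> a b. pd c (\<lambda>y. phi y $ a $ b) x)"
    unfolding md_def using Cinf_line0[OF apk_facts(3)[OF ap] z[folded x_def]] by simp
  have C: "((\<lambda>t. christoffel g (x + t *\<^sub>R axis c 1) k' a b) has_real_derivative
            pd c (\<lambda>y. christoffel g y k' a b) x) (at 0)" for k' a b
    using christoffel_diff[OF U R z[folded x_def], of c k' a b]
    unfolding pd_def by (simp add: DERIV_deriv_iff_real_differentiable)
  have "((\<lambda>t. EE \<delta> (g (x + t *\<^sub>R axis c 1)) (christoffel g (x + t *\<^sub>R axis c 1)) (phi (x + t *\<^sub>R axis c 1))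
            ((\<lambda>t. ypart z) t) P Q) has_real_derivative
        dEE \<delta> (g (x + 0 *\<^sub>R axis c 1)) (\<chi> a b. pd c (\<lambda>y. g y $ a $ b) x) (christoffel g (x + 0 *\<^sub>R axis c 1))
          (\<lambda>k a b. pd c (\<lambda>y. christoffel g y k a b) x) (phi (x + 0 *\<^sub>R axis c 1))
          (\<chi> a b. pd c (\<lambda>y. phi y $ a $ b) x) (ypart z) 0 P Q) (at 0)"
    by (rule EE_deriv[OF G P vd_const C])
  then show ?thesis by (simp add: dG_def gBS_form_EE x_def)
qed

lemma lineG_Inr:
  shows "((\<lambda>t. gBS_form g phi \<delta> (z + t *\<^sub>R axis (Inr c) 1) P Q) has_real_derivative dG g phi \<delta> (Inr c) z P Q) (at 0)"
proof -
  define x where "x = xpart z"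
  have Y: "vd (\<lambda>t. ypart z + t *\<^sub>R axis c 1) (axis c 1)"
    unfolding vd_def
  proof
    fix a
    show "((\<lambda>t. (ypart z + t *\<^sub>R axis c 1) $ a) has_real_derivative axis c 1 $ a) (at 0)"
      apply simp
      apply (rule DERIV_cong)
       apply (rule DERIV_add[OF DERIV_const DERIV_mult[OF DERIV_ident DERIV_const]])
      apply simp
      done
  qed
  have C: "((\<lambda>t. christoffel g x k' a b) has_real_derivative 0) (at 0)" for k' a b by simp
  have "((\<lambda>t. EE \<delta> ((\<lambda>t. g x) t) ((\<lambda>t. christoffel g x) t) ((\<lambda>t. phi x) t)
            (ypart z + t *\<^sub>R axis c 1) P Q) has_real_derivative
        dEE \<delta> (g x) 0 (christoffel g x) (\<lambda>k a b. 0) (phi x) 0 (ypart z + 0 *\<^sub>R axis c 1) (axis c 1) P Q) (at 0)"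
    by (rule EE_deriv[OF md_const md_const Y C])
  then show ?thesis by (simp add: dG_def gBS_form_EE x_def)
qed

lemma lineG:
  assumes U: "open U" and ap: "anti_paraKaehler U g phi k" and z: "xpart z \<in> U"
  shows "((\<lambda>t. gBS_form g phi \<delta> (z + t *\<^sub>R axis \<mu> 1) P Q) has_real_derivative dG g phi \<delta> \<mu> z P Q) (at 0)"
  by (cases \<mu>) (simp_all only: lineG_Inl[OF assms] lineG_Inr)

lemma pdG:
  assumes U: "open U" and ap: "anti_paraKaehler U g phi k" and z: "xpart z \<in> U"
  shows "pd \<mu> (\<lambda>z. gBS g phi \<delta> z $ \<alpha> $ \<beta>) z = dG g phi \<delta> \<mu> z (axis \<alpha> 1) (axis \<beta> 1)"
proof (rule pd_eqI)
  have "(\<lambda>t. gBS g phi \<delta> (z + t *\<^sub>R axis \<mu> 1) $ \<alpha> $ \<beta>) = (\<lambda>t. gBS_form g phi \<delta> (z + t *\<^sub>R axis \<mu> 1) (axis \<alpha> 1) (axis \<beta> 1))"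
    by (simp add: gBS_def)
  then show "((\<lambda>t. gBS g phi \<delta> (z + t *\<^sub>R axis \<mu> 1) $ \<alpha> $ \<beta>) has_real_derivative dG g phi \<delta> \<mu> z (axis \<alpha> 1) (axis \<beta> 1)) (at 0)"
    using lineG[OF assms] by simp
qed

lemma dG_lin1:
  assumes U: "open U" and ap: "anti_paraKaehler U g phi k" and z: "xpart z \<in> U"
  shows "(\<Sum>b\<in>UNIV. B $ b * dG g phi \<delta> \<mu> z (axis b 1) Q) = dG g phi \<delta> \<mu> z B Q"
proof -
  have "((\<lambda>t. \<Sum>b\<in>UNIV. B $ b * gBS_form g phi \<delta> (z + t *\<^sub>R axis \<mu> 1) (axis b 1) Q) has_real_derivative
          (\<Sum>b\<in>UNIV. B $ b * dG g phi \<delta> \<mu> z (axis b 1) Q)) (at 0)"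
    by (rule DERIV_sum) (rule DERIV_cmult[OF lineG[OF assms]])
  moreover have "(\<lambda>t. \<Sum>b\<in>UNIV. B $ b * gBS_form g phi \<delta> (z + t *\<^sub>R axis \<mu> 1) (axis b 1) Q)
      = (\<lambda>t. gBS_form g phi \<delta> (z + t *\<^sub>R axis \<mu> 1) B Q)"
    by (rule ext) (rule lin_expand[OF lin_gBS1, symmetric])
  ultimately have "((\<lambda>t. gBS_form g phi \<delta> (z + t *\<^sub>R axis \<mu> 1) B Q) has_real_derivative
          (\<Sum>b\<in>UNIV. B $ b * dG g phi \<delta> \<mu> z (axis b 1) Q)) (at 0)"
    by (simp only:)
  from DERIV_unique[OF this lineG[OF assms]] show ?thesis .
qed

lemma dG_lin2:
  assumes U: "open U" and ap: "anti_paraKaehler U g phi k" and z: "xpart z \<in> U"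
  shows "(\<Sum>b\<in>UNIV. B $ b * dG g phi \<delta> \<mu> z P (axis b 1)) = dG g phi \<delta> \<mu> z P B"
proof -
  have "((\<lambda>t. \<Sum>b\<in>UNIV. B $ b * gBS_form g phi \<delta> (z + t *\<^sub>R axis \<mu> 1) P (axis b 1)) has_real_derivative
          (\<Sum>b\<in>UNIV. B $ b * dG g phi \<delta> \<mu> z P (axis b 1))) (at 0)"
    by (rule DERIV_sum) (rule DERIV_cmult[OF lineG[OF assms]])
  moreover have "(\<lambda>t. \<Sum>b\<in>UNIV. B $ b * gBS_form g phi \<delta> (z + t *\<^sub>R axis \<mu> 1) P (axis b 1))
      = (\<lambda>t. gBS_form g phi \<delta> (z + t *\<^sub>R axis \<mu> 1) P B)"
    by (rule ext) (rule lin_expand[OF lin_gBS2, symmetric])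
  ultimately have "((\<lambda>t. gBS_form g phi \<delta> (z + t *\<^sub>R axis \<mu> 1) P B) has_real_derivative
          (\<Sum>b\<in>UNIV. B $ b * dG g phi \<delta> \<mu> z P (axis b 1))) (at 0)"
    by (simp only:)
  from DERIV_unique[OF this lineG[OF assms]] show ?thesis .
qed



definition hh :: "real^'n::finite^'n \<Rightarrow> real^'n \<Rightarrow> real \<Rightarrow> real^'n \<Rightarrow> real^'n \<Rightarrow> real" where
  "hh G S \<delta> u w = u \<bullet> (G *v w) + \<delta>\<^sup>2 * (u \<bullet> S) * (w \<bullet> S)"

lemma hh_add1: "hh G S \<delta> (u + u') w = hh G S \<delta> u w + hh G S \<delta> u' w"
  by (simp add: hh_def inner_add_left algebra_simps)
lemma hh_scale1: "hh G S \<delta> (c *\<^sub>R u) w = c * hh G S \<delta> u w"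
  by (simp add: hh_def algebra_simps)
lemma hh_lin1: "linear (\<lambda>u. hh G S \<delta> u w)"
  by (rule linearI) (simp_all add: hh_add1 hh_scale1)
lemma hh_neg1: "hh G S \<delta> (- u) w = - hh G S \<delta> u w"
  using hh_scale1[of G S \<delta> "-1" u w] by simp
lemma hh_sum1: "hh G S \<delta> (\<Sum>c\<in>A. f c *\<^sub>R v c) w = (\<Sum>c\<in>A. f c * hh G S \<delta> (v c) w)"
  using linear_sum[OF hh_lin1[of G S \<delta> w], of "\<lambda>c. f c *\<^sub>R v c" A] by (simp add: hh_scale1)
lemma hh_zero2[simp]: "hh G S \<delta> u 0 = 0" by (simp add: hh_def)
lemma hh_sym: assumes "transpose G = G" shows "hh G S \<delta> u w = hh G S \<delta> w u"
proof -
  have "u \<bullet> (G *v w) = (u v* G) \<bullet> w" by (simp add: dot_lmul_matrix)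
  also have "u v* G = transpose G *v u" by simp
  also have "\<dots> = G *v u" using assms by simp
  finally have "u \<bullet> (G *v w) = w \<bullet> (G *v u)" by (simp add: inner_commute)
  then show ?thesis by (simp add: hh_def)
qed

lemma mv_zero_left[simp]: "(0::real^'n::finite^'m::finite) *v x = 0"
  by (simp add: matrix_vector_mult_def vec_eq_iff)

lemma dEE_VP0:
  assumes "VV C y P = 0"
  shows "dEE \<delta> G G' C C' \<Phi> \<Phi>' y 0 P Q = xpart P \<bullet> (G' *v xpart Q) + hh G (G *v (\<Phi> *v y)) \<delta> (dVV C C' y 0 P) (VV C y Q)"
  using assms by (simp add: dEE_def Let_def hh_def)

lemma dEE_y_VP0:
  assumes "VV C y P = 0"
  shows "dEE \<delta> G 0 C (\<lambda>k a b. 0) \<Phi> 0 y Y' P Q = hh G (G *v (\<Phi> *v y)) \<delta> (dVV C (\<lambda>k a b. 0) y Y' P) (VV C y Q)"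
  using assms by (simp add: dEE_def Let_def hh_def)

lemma dEE_both0:
  assumes "VV C y P = 0" "VV C y Q = 0"
  shows "dEE \<delta> G G' C C' \<Phi> \<Phi>' y Y' P Q = xpart P \<bullet> (G' *v xpart Q)"
  using assms by (simp add: dEE_def Let_def)

lemma EE_hh: "EE \<delta> G C \<Phi> y P Q = xpart P \<bullet> (G *v xpart Q) + hh G (G *v (\<Phi> *v y)) \<delta> (VV C y P) (VV C y Q)"
  by (simp add: EE_def hh_def)

lemma VV_tvec: "VV C y (tvec (axis j 1) b) = (\<chi> k. b $ k + (\<Sum>c\<in>UNIV. C k j c * y $ c))"
proof -
  have "(\<Sum>a\<in>UNIV. \<Sum>c\<in>UNIV. C k a c * axis j 1 $ a * y $ c) = (\<Sum>c\<in>UNIV. C k j c * y $ c)" for k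
    by (subst sum.swap) simp
  then show ?thesis by (simp add: VV_def)
qed

lemma dVV_x: "dVV C C' y 0 (tvec (axis j 1) b) = (\<chi> k. \<Sum>c\<in>UNIV. C' k j c * y $ c)"
proof -
  have "(\<Sum>a\<in>UNIV. \<Sum>c\<in>UNIV. C' k a c * axis j 1 $ a * y $ c) = (\<Sum>c\<in>UNIV. C' k j c * y $ c)" for k
    by (subst sum.swap) simp
  then show ?thesis by (simp add: dVV_def)
qed

lemma sum_axis_r[simp]: "(\<Sum>a\<in>UNIV. f a * (axis i (1::real) $ a)) = f i"
  by simp

lemma dVV_y: "dVV C (\<lambda>k a b. 0) y (axis c 1) (tvec (axis j 1) b) = (\<chi> k. C k j c)"
proof -
  have "(\<Sum>a\<in>UNIV. \<Sum>b\<in>UNIV. C k a b * axis j 1 $ a * axis c 1 $ b) = C k j c" for k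
  proof -
    have "(\<Sum>b\<in>UNIV. C k a b * axis j 1 $ a * axis c 1 $ b) = C k a c * axis j 1 $ a" for a
      using sum_axis_l[of "\<lambda>b. C k a b * axis j 1 $ a" c] by simp
    then show ?thesis by simp
  qed
  then show ?thesis by (simp add: dVV_def)
qed




lemma axis_M_axis: "axis a 1 \<bullet> (M *v axis b (1::real)) = M $ a $ b"
  by (simp add: inner_axis' matrix_vector_mult_basis column_def)

lemma sum_axis_l'[simp]: "(\<Sum>a\<in>UNIV. (axis i (1::real) $ a) * f a) = f i"
  using sum_axis_l[of f i] by (simp add: mult.commute)

lemma xy_zero: "xpart W = 0 \<Longrightarrow> ypart W = 0 \<Longrightarrow> W = 0"
  unfolding vec_eq_iff xpart_def ypart_def by (metis (full_types) sum.exhaust vec_lambda_beta zero_index)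

lemma VV_x0: "xpart W = 0 \<Longrightarrow> VV C y W = ypart W"
  by (simp add: VV_def vec_eq_iff)

lemma gBS_posdef:
  assumes R: "riemannian_metric_on U g" and z: "xpart z \<in> U"
  shows "\<forall>W. W \<noteq> 0 \<longrightarrow> W \<bullet> (gBS g phi \<delta> z *v W) > 0"
proof (intro allI impI)
  fix W :: "real^('a+'a)"
  assume W: "W \<noteq> 0"
  define x where "x = xpart z"
  define S where "S = g x *v (phi x *v ypart z)"
  define V where "V = VV (christoffel g x) (ypart z) W"
  have pos: "\<forall>v. v \<noteq> 0 \<longrightarrow> v \<bullet> (g x *v v) > 0" using metric_facts(2)[OF R z] x_def by simp
  have nn: "v \<bullet> (g x *v v) \<ge> 0" for v using pos by (cases "v = 0") (auto intro: less_imp_le)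
  have e: "W \<bullet> (gBS g phi \<delta> z *v W) = xpart W \<bullet> (g x *v xpart W) + hh (g x) S \<delta> V V"
    by (simp add: gBS_bil gBS_form_EE EE_hh x_def S_def V_def)
  have h: "hh (g x) S \<delta> V V = V \<bullet> (g x *v V) + \<delta>\<^sup>2 * ((V \<bullet> S) * (V \<bullet> S))" by (simp add: hh_def mult.assoc)
  have sq: "\<delta>\<^sup>2 * ((V \<bullet> S) * (V \<bullet> S)) \<ge> 0" by (intro mult_nonneg_nonneg zero_le_square) simp
  show "W \<bullet> (gBS g phi \<delta> z *v W) > 0"
  proof (cases "xpart W = 0")
    case True
    then have "ypart W \<noteq> 0" using W xy_zero by blast
    moreover have "V = ypart W" using True by (simp add: V_def VV_x0)
    ultimately have "V \<bullet> (g x *v V) > 0" using pos by simp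
    then show ?thesis using e h sq nn[of "xpart W"] by linarith
  next
    case False
    then have "xpart W \<bullet> (g x *v xpart W) > 0" using pos by simp
    then show ?thesis using e h sq nn[of V] by linarith
  qed
qed

lemma sum_swap3: "(\<Sum>a\<in>A. \<Sum>b\<in>B. \<Sum>l\<in>L. f a b l) = (\<Sum>l\<in>L. \<Sum>a\<in>A. \<Sum>b\<in>B. f a b l)"
proof -
  have "(\<Sum>a\<in>A. \<Sum>b\<in>B. \<Sum>l\<in>L. f a b l) = (\<Sum>a\<in>A. \<Sum>l\<in>L. \<Sum>b\<in>B. f a b l)"
    by (rule sum.cong[OF refl]) (rule sum.swap)
  also have "\<dots> = (\<Sum>l\<in>L. \<Sum>a\<in>A. \<Sum>b\<in>B. f a b l)" by (rule sum.swap)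
  finally show ?thesis .
qed

lemma sff_zero:
  assumes U: "open U" and ap: "anti_paraKaehler U g phi k" and sm: "smooth_vector_field U \<xi>"
    and iso: "isometric_immersion U g (gBS g phi \<delta>) (section_map \<xi>)" and x0: "x0 \<in> U"
  shows "sff g (gBS g phi \<delta>) (section_map \<xi>) x0 i j \<gamma> = 0"
proof -
  define F where "F = section_map \<xi>"
  define z0 where "z0 = F x0"
  define C0 where "C0 = christoffel g x0"
  define y0 where "y0 = \<xi> x0"
  define g0 where "g0 = g x0"
  define S where "S = g0 *v (phi x0 *v y0)"
  have xz: "xpart z0 = x0" "ypart z0 = y0" by (simp_all add: z0_def F_def section_map_def y0_def)
  have R: "riemannian_metric_on U g" using apk_facts(1)[OF ap] .
  have gsym: "transpose g0 = g0" using metric_facts(1)[OF R x0] g0_def by simp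
  have nab: "pd c (\<lambda>y. \<xi> y $ m) x = - (\<Sum>b\<in>UNIV. christoffel g x m c b * \<xi> x $ b)" if "x \<in> U" for x c m
    by (rule nabla_xi[OF ap iso that])
  have xiC: "Cinf_on U (\<lambda>x. \<xi> x $ m)" for m using sm unfolding smooth_vector_field_def by blast
  define a' where "a' = (\<chi> m. pd i (\<lambda>y. \<xi> y $ m) x0)"
  define b' where "b' = (\<chi> m. pd j (\<lambda>y. \<xi> y $ m) x0)"
  define A where "A = tvec (axis i 1) a'"
  define B where "B = tvec (axis j 1) b'"
  have dA: "dmap F x0 i = A" by (simp add: F_def A_def a'_def dmap_sec)
  have dB: "dmap F x0 j = B" by (simp add: F_def B_def b'_def dmap_sec)
  have VA: "VV C0 y0 A = 0"
    unfolding A_def VV_tvec by (simp add: vec_eq_iff a'_def nab[OF x0] C0_def y0_def)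
  have VB: "VV C0 y0 B = 0"
    unfolding B_def VV_tvec by (simp add: vec_eq_iff b'_def nab[OF x0] C0_def y0_def)
  have Cd: "((\<lambda>t. christoffel g (x0 + t *\<^sub>R axis c 1) m a b) has_real_derivative
            pd c (\<lambda>y. christoffel g y m a b) x0) (at 0)" for c m a b
    using christoffel_diff[OF U R x0, of c m a b]
    unfolding pd_def by (simp add: DERIV_deriv_iff_real_differentiable)
  have xid: "((\<lambda>t. \<xi> (x0 + t *\<^sub>R axis c 1) $ m) has_real_derivative pd c (\<lambda>y. \<xi> y $ m) x0) (at 0)" for c m
    using Cinf_line0[OF xiC x0] .
  have Zgen: "pd c (\<lambda>y. pd d (\<lambda>y'. \<xi> y' $ m) y) x0
     = - (\<Sum>b\<in>UNIV. pd c (\<lambda>y. christoffel g y m d b) x0 * y0 $ b + C0 m d b * pd c (\<lambda>y. \<xi> y $ b) x0)" for c d m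
  proof -
    have "pd c (\<lambda>y. pd d (\<lambda>y'. \<xi> y' $ m) y) x0 = pd c (\<lambda>y. - (\<Sum>b\<in>UNIV. christoffel g y m d b * \<xi> y $ b)) x0"
      by (rule pd_local[OF U x0]) (rule nab)
    also have "\<dots> = - (\<Sum>b\<in>UNIV. pd c (\<lambda>y. christoffel g y m d b) x0 * \<xi> x0 $ b + christoffel g x0 m d b * pd c (\<lambda>y. \<xi> y $ b) x0)"
      apply (rule pd_eqI)
      apply (rule DERIV_cong)
       apply (rule DERIV_minus)
       apply (rule DERIV_sum)
       apply (rule DERIV_mult)
        apply (rule Cd)
       apply (rule xid)
      apply (simp add: mult_ac)
      done
    finally show ?thesis by (simp add: C0_def y0_def)
  qed
  define Z where "Z = (\<chi> m. pd i (\<lambda>y. pd j (\<lambda>y'. \<xi> y' $ m) y) x0)"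
  have Zsym: "Z = (\<chi> m. pd j (\<lambda>y. pd i (\<lambda>y'. \<xi> y' $ m) y) x0)"
    unfolding Z_def vec_eq_iff using schwarz[OF U x0 xiC] by simp
  have X1: "(\<chi> m. \<Sum>b\<in>UNIV. pd i (\<lambda>y. christoffel g y m j b) x0 * y0 $ b) + (\<chi> m. \<Sum>c\<in>UNIV. C0 m j c * a' $ c) = - Z"
    unfolding Z_def vec_eq_iff by (simp add: Zgen a'_def sum.distrib)
  have X2: "(\<chi> m. \<Sum>b\<in>UNIV. pd j (\<lambda>y. christoffel g y m i b) x0 * y0 $ b) + (\<chi> m. \<Sum>c\<in>UNIV. C0 m i c * b' $ c) = - Z"
    unfolding Zsym vec_eq_iff by (simp add: Zgen b'_def sum.distrib)
  define w where "w = (\<chi> \<gamma>. pd i (\<lambda>y. pd j (\<lambda>y'. F y' $ \<gamma>) y) x0 - (\<Sum>k\<in>UNIV. C0 k i j * pd k (\<lambda>y. F y $ \<gamma>) x0))"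
  have Fl: "(\<lambda>y. F y $ Inl a) = (\<lambda>y. y $ a)" for a by (simp add: F_def section_map_def tvec_def)
  have Fr: "(\<lambda>y. F y $ Inr a) = (\<lambda>y. \<xi> y $ a)" for a by (simp add: F_def section_map_def tvec_def)
  have pdconst: "pd c (\<lambda>y. r) x = 0" for c and r :: real and x :: "real^'a"
    by (rule pd_eqI) simp
  have pdc: "pd c (\<lambda>y'. y' $ a) = (\<lambda>x. if a = c then 1 else 0)" for c a :: 'a
    by (rule ext) (simp add: pd_coord)
  have wx: "xpart w = (\<chi> a. - C0 a i j)"
  proof -
    have "(\<Sum>k\<in>UNIV. C0 k i j * (if a = k then 1 else 0)) = C0 a i j" for a
    proof -
      have "C0 k i j * (if a = k then 1 else 0) = (if a = k then C0 a i j else 0)" for k by simp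
      then show ?thesis by simp
    qed
    then show ?thesis by (simp add: xpart_def w_def Fl pd_coord pdc pdconst vec_eq_iff)
  qed
  have wy: "ypart w = (\<chi> a. Z $ a - (\<Sum>k\<in>UNIV. C0 k i j * pd k (\<lambda>y. \<xi> y $ a) x0))"
    by (simp add: ypart_def w_def Fr Z_def vec_eq_iff)
  have Vw: "VV C0 y0 w = Z"
  proof -
    have "(\<Sum>k\<in>UNIV. C0 k i j * pd k (\<lambda>y. \<xi> y $ m) x0) = - (\<Sum>a\<in>UNIV. \<Sum>b\<in>UNIV. C0 m a b * C0 a i j * y0 $ b)" for m
      by (simp add: nab[OF x0] C0_def y0_def sum_distrib_left sum_negf mult_ac)
    then show ?thesis
      by (simp add: VV_def wx wy vec_eq_iff sum_negf)
  qed
  define G where "G = gBS g phi \<delta>"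
  have z0U: "xpart z0 \<in> U" using xz x0 by simp
  have pdG': "pd \<alpha> (\<lambda>z. G z $ \<beta> $ l) z0 = dG g phi \<delta> \<alpha> z0 (axis \<beta> 1) (axis l 1)" for \<alpha> \<beta> l
    unfolding G_def by (rule pdG[OF U ap z0U])
  define Gx where "Gx c = (\<chi> a b. pd c (\<lambda>y. g y $ a $ b) x0)" for c
  have VA': "VV (christoffel g x0) (\<xi> x0) A = 0" using VA by (simp add: C0_def y0_def)
  have VB': "VV (christoffel g x0) (\<xi> x0) B = 0" using VB by (simp add: C0_def y0_def)
  have dVVA: "dVV C C' y 0 A = (\<chi> k. \<Sum>c\<in>UNIV. C' k i c * y $ c)" for C C' y by (simp add: A_def dVV_x)
  have dVVB: "dVV C C' y 0 B = (\<chi> k. \<Sum>c\<in>UNIV. C' k j c * y $ c)" for C C' y by (simp add: B_def dVV_x)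
  have dVVAy: "dVV C (\<lambda>k a b. 0) y (axis c 1) A = (\<chi> k. C k i c)" for C y c by (simp add: A_def dVV_y)
  have dVVBy: "dVV C (\<lambda>k a b. 0) y (axis c 1) B = (\<chi> k. C k j c)" for C y c by (simp add: B_def dVV_y)
  have xA: "xpart A = axis i 1" and xB: "xpart B = axis j 1" by (simp_all add: A_def B_def)
  have dGxB: "dG g phi \<delta> (Inl c) z0 B Q = axis j 1 \<bullet> (Gx c *v xpart Q)
       + hh g0 S \<delta> (\<chi> m. \<Sum>b\<in>UNIV. pd c (\<lambda>y. christoffel g y m j b) x0 * y0 $ b) (VV C0 y0 Q)" for c Q
    unfolding dG_def C0_def y0_def g0_def S_def Gx_def by (simp add: xz y0_def dEE_VP0[OF VB'] dVVB xB)
  have dGxA: "dG g phi \<delta> (Inl c) z0 A Q = axis i 1 \<bullet> (Gx c *v xpart Q)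
       + hh g0 S \<delta> (\<chi> m. \<Sum>b\<in>UNIV. pd c (\<lambda>y. christoffel g y m i b) x0 * y0 $ b) (VV C0 y0 Q)" for c Q
    unfolding dG_def C0_def y0_def g0_def S_def Gx_def by (simp add: xz y0_def dEE_VP0[OF VA'] dVVA xA)
  have dGyB: "dG g phi \<delta> (Inr c) z0 B Q = hh g0 S \<delta> (\<chi> m. C0 m j c) (VV C0 y0 Q)" for c Q
    unfolding dG_def C0_def y0_def g0_def S_def by (simp add: xz y0_def dEE_y_VP0[OF VB'] dVVBy)
  have dGyA: "dG g phi \<delta> (Inr c) z0 A Q = hh g0 S \<delta> (\<chi> m. C0 m i c) (VV C0 y0 Q)" for c Q
    unfolding dG_def C0_def y0_def g0_def S_def by (simp add: xz y0_def dEE_y_VP0[OF VA'] dVVAy)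
  have vsum: "(\<Sum>c\<in>UNIV. v $ c *\<^sub>R (\<chi> m. C0 m d c)) = (\<chi> m. \<Sum>c\<in>UNIV. C0 m d c * v $ c)" for v d
    by (simp add: vec_eq_iff sum_component mult.commute)
  have D1: "(\<Sum>\<alpha>\<in>UNIV. A $ \<alpha> * dG g phi \<delta> \<alpha> z0 B Q) = axis j 1 \<bullet> (Gx i *v xpart Q) + hh g0 S \<delta> (- Z) (VV C0 y0 Q)" for Q
  proof -
    have "(\<Sum>\<alpha>\<in>UNIV. A $ \<alpha> * dG g phi \<delta> \<alpha> z0 B Q)
       = (\<Sum>c\<in>UNIV. A $ Inl c * dG g phi \<delta> (Inl c) z0 B Q) + (\<Sum>c\<in>UNIV. A $ Inr c * dG g phi \<delta> (Inr c) z0 B Q)"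
      by (rule sum_Plus_UNIV)
    also have "\<dots> = dG g phi \<delta> (Inl i) z0 B Q + (\<Sum>c\<in>UNIV. a' $ c * hh g0 S \<delta> (\<chi> m. C0 m j c) (VV C0 y0 Q))"
      by (simp add: A_def tvec_def dGyB)
    also have "(\<Sum>c\<in>UNIV. a' $ c * hh g0 S \<delta> (\<chi> m. C0 m j c) (VV C0 y0 Q))
       = hh g0 S \<delta> (\<chi> m. \<Sum>c\<in>UNIV. C0 m j c * a' $ c) (VV C0 y0 Q)"
      by (simp add: hh_sum1[symmetric] vsum)
    finally show ?thesis using X1 by (simp add: dGxB hh_add1[symmetric])
  qed
  have D2: "(\<Sum>\<alpha>\<in>UNIV. B $ \<alpha> * dG g phi \<delta> \<alpha> z0 A Q) = axis i 1 \<bullet> (Gx j *v xpart Q) + hh g0 S \<delta> (- Z) (VV C0 y0 Q)" for Q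
  proof -
    have "(\<Sum>\<alpha>\<in>UNIV. B $ \<alpha> * dG g phi \<delta> \<alpha> z0 A Q)
       = (\<Sum>c\<in>UNIV. B $ Inl c * dG g phi \<delta> (Inl c) z0 A Q) + (\<Sum>c\<in>UNIV. B $ Inr c * dG g phi \<delta> (Inr c) z0 A Q)"
      by (rule sum_Plus_UNIV)
    also have "\<dots> = dG g phi \<delta> (Inl j) z0 A Q + (\<Sum>c\<in>UNIV. b' $ c * hh g0 S \<delta> (\<chi> m. C0 m i c) (VV C0 y0 Q))"
      by (simp add: B_def tvec_def dGyA)
    also have "(\<Sum>c\<in>UNIV. b' $ c * hh g0 S \<delta> (\<chi> m. C0 m i c) (VV C0 y0 Q))
       = hh g0 S \<delta> (\<chi> m. \<Sum>c\<in>UNIV. C0 m i c * b' $ c) (VV C0 y0 Q)"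
      by (simp add: hh_sum1[symmetric] vsum)
    finally show ?thesis using X2 by (simp add: dGxA hh_add1[symmetric])
  qed
  have D3: "dG g phi \<delta> l z0 A B = (case l of Inl m \<Rightarrow> Gx m $ i $ j | Inr m \<Rightarrow> 0)" for l
    by (cases l) (simp_all add: dG_def xz y0_def dEE_both0[OF VA' VB'] xA xB axis_M_axis Gx_def)
  have Vw': "VV (christoffel g x0) (\<xi> x0) w = Z" using Vw by (simp add: C0_def y0_def)
  have Gw: "(G z0 *v w) $ l = xpart (axis l 1) \<bullet> (g0 *v xpart w) + hh g0 S \<delta> (VV C0 y0 (axis l 1)) Z" for l
    unfolding G_def gBS_mv gBS_form_EE EE_hh C0_def g0_def S_def y0_def by (simp add: xz y0_def Vw')
  define K where "K l = (\<Sum>\<alpha>\<in>UNIV. \<Sum>\<beta>\<in>UNIV. A $ \<alpha> * B $ \<beta> *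
      (pd \<alpha> (\<lambda>z. G z $ \<beta> $ l) z0 + pd \<beta> (\<lambda>z. G z $ \<alpha> $ l) z0 - pd l (\<lambda>z. G z $ \<alpha> $ \<beta>) z0))" for l
  have Keq: "K l = (\<Sum>\<alpha>\<in>UNIV. A $ \<alpha> * dG g phi \<delta> \<alpha> z0 B (axis l 1))
      + (\<Sum>\<alpha>\<in>UNIV. B $ \<alpha> * dG g phi \<delta> \<alpha> z0 A (axis l 1)) - dG g phi \<delta> l z0 A B" for l
  proof -
    have "K l = (\<Sum>\<alpha>\<in>UNIV. \<Sum>\<beta>\<in>UNIV. A $ \<alpha> * (B $ \<beta> * dG g phi \<delta> \<alpha> z0 (axis \<beta> 1) (axis l 1)))
       + (\<Sum>\<alpha>\<in>UNIV. \<Sum>\<beta>\<in>UNIV. B $ \<beta> * (A $ \<alpha> * dG g phi \<delta> \<beta> z0 (axis \<alpha> 1) (axis l 1)))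
       - (\<Sum>\<alpha>\<in>UNIV. \<Sum>\<beta>\<in>UNIV. A $ \<alpha> * (B $ \<beta> * dG g phi \<delta> l z0 (axis \<alpha> 1) (axis \<beta> 1)))"
      unfolding K_def pdG' by (simp add: algebra_simps sum.distrib sum_subtractf)
    also have "(\<Sum>\<alpha>\<in>UNIV. \<Sum>\<beta>\<in>UNIV. A $ \<alpha> * (B $ \<beta> * dG g phi \<delta> \<alpha> z0 (axis \<beta> 1) (axis l 1)))
        = (\<Sum>\<alpha>\<in>UNIV. A $ \<alpha> * dG g phi \<delta> \<alpha> z0 B (axis l 1))"
      by (simp add: sum_distrib_left[symmetric] dG_lin1[OF U ap z0U])
    also have "(\<Sum>\<alpha>\<in>UNIV. \<Sum>\<beta>\<in>UNIV. B $ \<beta> * (A $ \<alpha> * dG g phi \<delta> \<beta> z0 (axis \<alpha> 1) (axis l 1)))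
        = (\<Sum>\<beta>\<in>UNIV. B $ \<beta> * dG g phi \<delta> \<beta> z0 A (axis l 1))"
      by (subst sum.swap) (simp add: sum_distrib_left[symmetric] dG_lin1[OF U ap z0U])
    also have "(\<Sum>\<alpha>\<in>UNIV. \<Sum>\<beta>\<in>UNIV. A $ \<alpha> * (B $ \<beta> * dG g phi \<delta> l z0 (axis \<alpha> 1) (axis \<beta> 1)))
        = dG g phi \<delta> l z0 A B"
      by (simp add: sum_distrib_left[symmetric] dG_lin2[OF U ap z0U] dG_lin1[OF U ap z0U])
    finally show ?thesis .
  qed
  have hneg: "hh g0 S \<delta> (- Z) V = - hh g0 S \<delta> V Z" for V
    using hh_neg1[of g0 S \<delta> Z V] hh_sym[OF gsym, of S \<delta> Z V] by simp
  have Kfin: "K l = - 2 * (G z0 *v w) $ l" for l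
  proof (cases l)
    case (Inl m)
    have "axis m 1 \<bullet> (g0 *v xpart w) = - (\<Sum>a\<in>UNIV. g x0 $ m $ a * christoffel g x0 a i j)"
      by (simp add: wx inner_axis' matrix_vector_mult_def g0_def C0_def sum_negf)
    also have "\<dots> = - ((1/2) * (pd i (\<lambda>y. g y $ j $ m) x0 + pd j (\<lambda>y. g y $ i $ m) x0 - pd m (\<lambda>y. g y $ i $ j) x0))"
      by (simp add: christoffel_lower[OF R x0])
    finally have cl: "axis m 1 \<bullet> (g0 *v xpart w) = - ((1/2) * (pd i (\<lambda>y. g y $ j $ m) x0 + pd j (\<lambda>y. g y $ i $ m) x0 - pd m (\<lambda>y. g y $ i $ j) x0))" .
    show ?thesis using Inl by (simp add: Keq D1 D2 D3 Gw axis_M_axis Gx_def cl hneg algebra_simps)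
  next
    case (Inr m)
    show ?thesis using Inr by (simp add: Keq D1 D2 D3 Gw hneg)
  qed
  have Ginv: "matrix_inv (G z0) ** G z0 = mat 1"
    using matrix_inv_props(2)[OF posdef_invertible[OF gBS_posdef[OF R z0U]]] by (simp add: G_def)
  have sffe: "sff g G F x0 i j \<gamma> = w $ \<gamma> + (\<Sum>\<alpha>\<in>UNIV. \<Sum>\<beta>\<in>UNIV. christoffel G z0 \<gamma> \<alpha> \<beta> * A $ \<alpha> * B $ \<beta>)"
    unfolding sff_def w_def by (simp add: dA dB z0_def C0_def)
  have Cs: "(\<Sum>\<alpha>\<in>UNIV. \<Sum>\<beta>\<in>UNIV. christoffel G z0 \<gamma> \<alpha> \<beta> * A $ \<alpha> * B $ \<beta>)
      = (1/2) * (\<Sum>l\<in>UNIV. matrix_inv (G z0) $ \<gamma> $ l * K l)"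
  proof -
    have "(\<Sum>\<alpha>\<in>UNIV. \<Sum>\<beta>\<in>UNIV. christoffel G z0 \<gamma> \<alpha> \<beta> * A $ \<alpha> * B $ \<beta>)
      = (\<Sum>\<alpha>\<in>UNIV. \<Sum>\<beta>\<in>UNIV. \<Sum>l\<in>UNIV. (1/2) * (matrix_inv (G z0) $ \<gamma> $ l * (A $ \<alpha> * B $ \<beta> *
          (pd \<alpha> (\<lambda>z. G z $ \<beta> $ l) z0 + pd \<beta> (\<lambda>z. G z $ \<alpha> $ l) z0 - pd l (\<lambda>z. G z $ \<alpha> $ \<beta>) z0))))"
      unfolding christoffel_def by (simp add: sum_distrib_left sum_distrib_right mult_ac)
    also have "\<dots> = (\<Sum>l\<in>UNIV. \<Sum>\<alpha>\<in>UNIV. \<Sum>\<beta>\<in>UNIV. (1/2) * (matrix_inv (G z0) $ \<gamma> $ l * (A $ \<alpha> * B $ \<beta> *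
          (pd \<alpha> (\<lambda>z. G z $ \<beta> $ l) z0 + pd \<beta> (\<lambda>z. G z $ \<alpha> $ l) z0 - pd l (\<lambda>z. G z $ \<alpha> $ \<beta>) z0))))"
      by (rule sum_swap3)
    also have "\<dots> = (1/2) * (\<Sum>l\<in>UNIV. matrix_inv (G z0) $ \<gamma> $ l * K l)"
      unfolding K_def by (simp add: sum_distrib_left)
    finally show ?thesis .
  qed
  have Mw: "(\<Sum>l\<in>UNIV. matrix_inv (G z0) $ \<gamma> $ l * (G z0 *v w) $ l) = w $ \<gamma>"
  proof -
    have "(\<Sum>l\<in>UNIV. matrix_inv (G z0) $ \<gamma> $ l * (G z0 *v w) $ l) = (matrix_inv (G z0) *v (G z0 *v w)) $ \<gamma>"
      by (simp add: matrix_vector_mult_def)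
    also have "\<dots> = w $ \<gamma>" by (simp add: matrix_vector_mul_assoc Ginv)
    finally show ?thesis .
  qed
  have "sff g G F x0 i j \<gamma> = w $ \<gamma> + (1/2) * (\<Sum>l\<in>UNIV. matrix_inv (G z0) $ \<gamma> $ l * (- 2 * (G z0 *v w) $ l))"
    using sffe Cs Kfin by simp
  also have "\<dots> = w $ \<gamma> - (\<Sum>l\<in>UNIV. matrix_inv (G z0) $ \<gamma> $ l * (G z0 *v w) $ l)"
    by (simp add: sum_distrib_left sum_negf mult_ac)
  also have "\<dots> = 0" using Mw by simp
  finally show ?thesis unfolding F_def G_def .
qed


theorem mainTheorem7:
  fixes U :: "(real^'n::finite) set"
    and g phi :: "real^'n \<Rightarrow> real^'n^'n"
    and \<xi> :: "real^'n \<Rightarrow> real^'n"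
    and k :: nat and \<delta> :: real
  assumes "open U"
    and "anti_paraKaehler U g phi k"
    and "smooth_vector_field U \<xi>"
    and "isometric_immersion U g (gBS g phi \<delta>) (section_map \<xi>)"
  shows "totally_geodesic U g (gBS g phi \<delta>) (section_map \<xi>)
       \<and> harmonic_map U g (gBS g phi \<delta>) (section_map \<xi>)"
proof -
  have z: "sff g (gBS g phi \<delta>) (section_map \<xi>) x i j \<gamma> = 0" if "x \<in> U" for x i j \<gamma>
    by (rule sff_zero[OF assms that])
  have "totally_geodesic U g (gBS g phi \<delta>) (section_map \<xi>)"
    unfolding totally_geodesic_def using z by blast
  moreover have "harmonic_map U g (gBS g phi \<delta>) (section_map \<xi>)"
    unfolding harmonic_map_def tension_def using z by simp
  ultimately show ?thesis ..
qed

end
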